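(* Let $d\ge1$ and $\alpha\in[0,1]$. Let $E=\{\pm e_i: i\in[d]\}\subseteq\mathbb R^d$ and let $D$ be the uniform distribution on $E$. For $v\in[-1,1]^d$ let $D_v$ be the distribution of $b\,e_i$, where $i$ is uniform in $[d]$ and then $b\in\{-1,1\}$ is drawn with $\mathbb E[b]=v_i$. Let $\mathcal D_\alpha=\{D_{\alpha v}: v\in\{-1,1\}^d\}$ and let $\mathcal B(\mathcal D_\alpha,D)$ be the decision problem: given access to an unknown distribution $D'\in\mathcal D_\alpha\cup\{D\}$, output $1$ if $D'\in\mathcal D_\alpha$ and $0$ if $D'=D$. Then for any $r>0$, any (randomized) statistical query algorithm that solves $\mathcal B(\mathcal D_\alpha,D)$ with success probability at least $2/3$ using the oracle $\mathrm{VSTAT}(d/(r\alpha^2))$ must make $2^{\Omega(r)}$ queries.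
   Context: $e_i$ is the $i$-th standard basis vector. For a distribution $D'$ over a domain $Z$ and $n>0$, the oracle $\mathrm{VSTAT}_{D'}(n)$, given any $\phi:Z\to[0,1]$, returns some $v$ with $|v-p_\phi|\le\max\{1/n,\sqrt{p_\phi(1-p_\phi)/n}\}$ where $p_\phi=\mathbb E_{D'}[\phi]$ (any such value may be returned); a statistical query algorithm accesses the input distribution only through such calls. The constant in $\Omega(\cdot)$ is absolute. *)

theory Defs
  imports "HOL-Probability.Probability"
begin

text \<open>Points of R^d are modelled as functions nat => real (only coordinates < d matter).\<close>

definition std_basis :: "nat \<Rightarrow> (nat \<Rightarrow> real)" where
  "std_basis i = (\<lambda>j. if j = i then 1 else 0)"

definition E_set :: "nat \<Rightarrow> (nat \<Rightarrow> real) set" where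
  "E_set d = {std_basis i | i. i < d} \<union> {- std_basis i | i. i < d}"

definition D_ref :: "nat \<Rightarrow> (nat \<Rightarrow> real) pmf" where
  "D_ref d = pmf_of_set (E_set d)"

text \<open>D_v: i uniform in [d], then b in {-1,1} with E[b] = v_i (i.e. P[b=1] = (1+v_i)/2); output b e_i.\<close>
definition D_vec :: "nat \<Rightarrow> (nat \<Rightarrow> real) \<Rightarrow> (nat \<Rightarrow> real) pmf" where
  "D_vec d v = do {
     i \<leftarrow> pmf_of_set {..<d};
     b \<leftarrow> bernoulli_pmf ((1 + v i) / 2);
     return_pmf (if b then std_basis i else - std_basis i) }"

definition D_family :: "nat \<Rightarrow> real \<Rightarrow> (nat \<Rightarrow> real) pmf set" where
  "D_family d \<alpha> = {D_vec d (\<lambda>i. \<alpha> * v i) | v. \<forall>i<d. v i \<in> {-1, 1}}"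

text \<open>Valid VSTAT_{P}(n) oracle (answers are any valid value; modelled as a function of the query).\<close>
definition vstat_valid ::
  "(nat \<Rightarrow> real) pmf \<Rightarrow> real \<Rightarrow> (((nat \<Rightarrow> real) \<Rightarrow> real) \<Rightarrow> real) \<Rightarrow> bool" where
  "vstat_valid P n orc \<longleftrightarrow>
     (\<forall>\<phi>. (\<forall>z. 0 \<le> \<phi> z \<and> \<phi> z \<le> 1) \<longrightarrow>
        (let p = measure_pmf.expectation P \<phi>
         in \<bar>orc \<phi> - p\<bar> \<le> max (1 / n) (sqrt (p * (1 - p) / n))))"

text \<open>A deterministic adaptive SQ algorithm: next query as a function of previous answers,
  and final output (True = 1, False = 0) as a function of all answers.\<close>
type_synonym sq_alg = "(real list \<Rightarrow> ((nat \<Rightarrow> real) \<Rightarrow> real)) \<times> (real list \<Rightarrow> bool)"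

fun sq_transcript :: "(real list \<Rightarrow> ((nat \<Rightarrow> real) \<Rightarrow> real)) \<Rightarrow>
    (((nat \<Rightarrow> real) \<Rightarrow> real) \<Rightarrow> real) \<Rightarrow> nat \<Rightarrow> real list" where
  "sq_transcript Q orc 0 = []"
| "sq_transcript Q orc (Suc k) =
     (let h = sq_transcript Q orc k in h @ [orc (Q h)])"

definition sq_run :: "sq_alg \<Rightarrow> nat \<Rightarrow> (((nat \<Rightarrow> real) \<Rightarrow> real) \<Rightarrow> real) \<Rightarrow> bool" where
  "sq_run A q orc = snd A (sq_transcript (fst A) orc q)"

text \<open>Randomized SQ algorithm = probability measure M over deterministic algorithms, each making
  q queries. It solves B(D_alpha, D) with VSTAT(n) with success prob >= 2/3.\<close>
definition solves_B ::
  "sq_alg measure \<Rightarrow> nat \<Rightarrow> nat \<Rightarrow> real \<Rightarrow> real \<Rightarrow> bool" where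
  "solves_B M q d \<alpha> n \<longleftrightarrow>
     (\<forall>P orc. P \<in> D_family d \<alpha> \<and> vstat_valid P n orc \<longrightarrow>
        {A \<in> space M. sq_run A q orc} \<in> sets M \<and>
        measure M {A \<in> space M. sq_run A q orc} \<ge> 2/3) \<and>
     (\<forall>orc. vstat_valid (D_ref d) n orc \<longrightarrow>
        {A \<in> space M. \<not> sq_run A q orc} \<in> sets M \<and>
        measure M {A \<in> space M. \<not> sq_run A q orc} \<ge> 2/3)"

end

theory Submission
  imports Defs
begin

lemma std_basis_inj: "std_basis i = std_basis j \<Longrightarrow> i = j"
  unfolding std_basis_def by (metis zero_neq_one)

lemma std_basis_neg_inj: "- std_basis i = - std_basis j \<Longrightarrow> i = j"
  proof -
  assume a: "- std_basis i = - std_basis j"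
  have "std_basis i = std_basis j"
  proof
    fix k show "std_basis i k = std_basis j k" using fun_cong[OF a, of k] by simp
  qed
  then show ?thesis by (rule std_basis_inj)
qed

lemma std_basis_ne: "std_basis i \<noteq> - std_basis j"
proof
  assume "std_basis i = - std_basis j"
  then have "std_basis i i = - std_basis j i" by simp
  then show False unfolding std_basis_def by (auto split: if_splits)
qed

lemma E_set_eq: "E_set d = std_basis ` {..<d} \<union> (\<lambda>i. - std_basis i) ` {..<d}"
  unfolding E_set_def by auto

lemma exp_vec:
  fixes \<phi> :: "(nat \<Rightarrow> real) \<Rightarrow> real"
  assumes d: "d > 0" and w: "\<And>i. i < d \<Longrightarrow> \<bar>w i\<bar> \<le> 1"
  shows "measure_pmf.expectation (D_vec d w) \<phi> =
     (\<Sum>i<d. (1 + w i)/2 * \<phi> (std_basis i) + (1 - w i)/2 * \<phi> (- std_basis i)) / real d"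
proof -
  have inner: "measure_pmf.expectation (bernoulli_pmf ((1 + w i) / 2) \<bind>
        (\<lambda>b. return_pmf (if b then std_basis i else - std_basis i))) \<phi>
      = (1 + w i)/2 * \<phi> (std_basis i) + (1 - w i)/2 * \<phi> (- std_basis i)" if "i < d" for i
  proof -
    have "0 \<le> (1 + w i)/2" "(1 + w i)/2 \<le> 1" using w[OF that] by auto
    then show ?thesis
      by (subst pmf_expectation_bind[of UNIV]) (auto simp: UNIV_bool field_simps)
  qed
  show ?thesis unfolding D_vec_def
    using d inner
    by (subst pmf_expectation_bind_pmf_of_set) (auto simp: sum_divide_distrib field_simps intro!: sum.cong)
qed

lemma exp_ref:
  fixes \<phi> :: "(nat \<Rightarrow> real) \<Rightarrow> real"

  assumes d: "d > 0"
  shows "measure_pmf.expectation (D_ref d) \<phi> =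
     (\<Sum>i<d. \<phi> (std_basis i) + \<phi> (- std_basis i)) / (2 * real d)"
proof -
  have inj1: "inj_on std_basis {..<d}" by (meson inj_onI std_basis_inj)
  have inj2: "inj_on (\<lambda>i. - std_basis i) {..<d}" by (meson inj_onI std_basis_neg_inj)
  have disj: "std_basis ` {..<d} \<inter> (\<lambda>i. - std_basis i) ` {..<d} = {}"
    using std_basis_ne by auto
  have fin: "finite (E_set d)" unfolding E_set_eq by auto
  have ne: "E_set d \<noteq> {}" using d unfolding E_set_eq by auto
  have card: "card (E_set d) = 2 * d"
    unfolding E_set_eq using card_Un_disjoint[OF _ _ disj] inj1 inj2
    by (simp add: card_image)
  have sum: "sum \<phi> (E_set d) = (\<Sum>i<d. \<phi> (std_basis i) + \<phi> (- std_basis i))"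
    unfolding E_set_eq
    by (simp add: sum.union_disjoint[OF _ _ disj] sum.reindex[OF inj1] sum.reindex[OF inj2] sum.distrib)
  show ?thesis unfolding D_ref_def
    using integral_pmf_of_set[OF ne fin, of \<phi>] sum card by simp
qed

lemma cosh_bound: "exp (x::real) + exp (- x) \<le> 2 * exp (x\<^sup>2 / 2)"
proof -
  define h where "h = 2 * \<bar>x\<bar>"
  have "-h * (1/2) + ln (1 + (1/2) * (exp h - 1)) \<le> h\<^sup>2 / 8"
    using Hoeffdings_lemma_aux[of h "1/2"] unfolding h_def by simp
  then have "ln ((1 + exp h) / 2) \<le> h / 2 + h\<^sup>2 / 8"
    by (simp add: field_simps)
  then have "(1 + exp h) / 2 \<le> exp (h / 2 + h\<^sup>2 / 8)"
    by (smt (verit) exp_gt_zero exp_le_cancel_iff exp_ln)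
  also have "h / 2 + h\<^sup>2 / 8 = \<bar>x\<bar> + x\<^sup>2 / 2" unfolding h_def by (simp add: power2_eq_square)
  finally have "(1 + exp (2 * \<bar>x\<bar>)) / 2 \<le> exp \<bar>x\<bar> * exp (x\<^sup>2 / 2)"
    unfolding h_def by (simp add: exp_add)
  then have "exp (- \<bar>x\<bar>) * (1 + exp (2 * \<bar>x\<bar>)) / 2 \<le> exp (x\<^sup>2 / 2)"
    by (simp add: exp_minus field_simps)
  moreover have "exp (- \<bar>x\<bar>) * (1 + exp (2 * \<bar>x\<bar>)) = exp x + exp (- x)"
    by (cases "x \<ge> 0") (simp_all add: algebra_simps flip: exp_add)
  ultimately show ?thesis by simp
qed

lemma mgf_sum:
  assumes "finite I"
  shows "(\<Sum>v\<in>PiE I (\<lambda>_. {-1::real, 1}). exp (l * (\<Sum>i\<in>I. v i * a i)))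
       = (\<Prod>i\<in>I. exp (l * a i) + exp (- (l * a i)))"
proof -
  have "(\<Prod>i\<in>I. exp (l * a i) + exp (- (l * a i))) = (\<Prod>i\<in>I. \<Sum>y\<in>{-1::real,1}. exp (l * (y * a i)))"
    by (simp add: add.commute)
  also have "\<dots> = (\<Sum>v\<in>PiE I (\<lambda>_. {-1::real, 1}). \<Prod>i\<in>I. exp (l * (v i * a i)))"
    by (rule prod_sum_PiE) (use assms in auto)
  also have "\<dots> = (\<Sum>v\<in>PiE I (\<lambda>_. {-1::real, 1}). exp (l * (\<Sum>i\<in>I. v i * a i)))"
    by (simp add: sum_distrib_left exp_sum[OF assms])
  finally show ?thesis ..
qed

lemma tail_one:
  assumes fin: "finite I" and s2: "\<sigma>2 = (\<Sum>i\<in>I. (a i)\<^sup>2)" and pos: "\<sigma>2 > 0" and t: "t \<ge> 0"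
  shows "real (card {v\<in>PiE I (\<lambda>_. {-1::real,1}). t < (\<Sum>i\<in>I. v i * a i)})
           \<le> 2 ^ card I * exp (- t\<^sup>2 / (2 * \<sigma>2))"
proof -
  define V where "V = PiE I (\<lambda>_. {-1::real,1})"
  define B where "B = {v\<in>V. t < (\<Sum>i\<in>I. v i * a i)}"
  define l where "l = t / \<sigma>2"
  have l0: "l \<ge> 0" using pos t unfolding l_def by simp
  have finV: "finite V" unfolding V_def using fin by (simp add: finite_PiE)
  have BV: "B \<subseteq> V" unfolding B_def by auto
  have "real (card B) * exp (l * t) = (\<Sum>v\<in>B. exp (l * t))" by simp
  also have "\<dots> \<le> (\<Sum>v\<in>B. exp (l * (\<Sum>i\<in>I. v i * a i)))"
    by (intro sum_mono) (use l0 in \<open>auto simp: B_def intro!: mult_left_mono\<close>)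
  also have "\<dots> \<le> (\<Sum>v\<in>V. exp (l * (\<Sum>i\<in>I. v i * a i)))"
    by (intro sum_mono2 finV BV) auto
  also have "\<dots> = (\<Prod>i\<in>I. exp (l * a i) + exp (- (l * a i)))"
    unfolding V_def by (rule mgf_sum[OF fin])
  also have "\<dots> \<le> (\<Prod>i\<in>I. 2 * exp ((l * a i)\<^sup>2 / 2))"
    by (intro prod_mono) (auto intro: cosh_bound add_nonneg_nonneg)
  also have "\<dots> = 2 ^ card I * exp (l\<^sup>2 * \<sigma>2 / 2)"
    by (simp add: prod.distrib exp_sum[OF fin, symmetric] s2 power_mult_distrib sum_distrib_left
        sum_divide_distrib)
  finally have "real (card B) * exp (l * t) \<le> 2 ^ card I * exp (l\<^sup>2 * \<sigma>2 / 2)" .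
  then have "real (card B) \<le> 2 ^ card I * exp (l\<^sup>2 * \<sigma>2 / 2) / exp (l * t)"
    by (simp add: field_simps)
  also have "\<dots> = 2 ^ card I * exp (l\<^sup>2 * \<sigma>2 / 2 - l * t)"
    by (simp add: exp_diff)
  also have "l\<^sup>2 * \<sigma>2 / 2 - l * t = - t\<^sup>2 / (2 * \<sigma>2)"
    unfolding l_def using pos by (simp add: field_simps power2_eq_square)
  finally show ?thesis unfolding B_def V_def .
qed

lemma tail_abs:
  assumes fin: "finite I" and t: "t \<ge> 0"
    and tr: "t\<^sup>2 \<ge> (r / 2) * (\<Sum>i\<in>I. (a i)\<^sup>2)"
  shows "real (card {v\<in>PiE I (\<lambda>_. {-1::real,1}). t < \<bar>\<Sum>i\<in>I. v i * a i\<bar>})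
           \<le> 2 * 2 ^ card I * exp (- r / 4)"
proof (cases "(\<Sum>i\<in>I. (a i)\<^sup>2) = 0")
  case True
  then have "\<forall>i\<in>I. a i = 0" using fin by (simp add: sum_nonneg_eq_0_iff)
  then have "{v\<in>PiE I (\<lambda>_. {-1::real,1}). t < \<bar>\<Sum>i\<in>I. v i * a i\<bar>} = {}"
    using t by auto
  then show ?thesis by (metis card.empty of_nat_0 exp_ge_zero mult_nonneg_nonneg zero_le_numeral zero_le_power)
next
  case False
  define \<sigma>2 where "\<sigma>2 = (\<Sum>i\<in>I. (a i)\<^sup>2)"
  have pos: "\<sigma>2 > 0" using False unfolding \<sigma>2_def
    by (metis less_eq_real_def sum_nonneg zero_le_power2)
  have e: "exp (- t\<^sup>2 / (2 * \<sigma>2)) \<le> exp (- r / 4)"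
  proof -
    have "r / 4 \<le> t\<^sup>2 / (2 * \<sigma>2)" using tr pos unfolding \<sigma>2_def[symmetric]
      by (simp add: field_simps)
    then show ?thesis by simp
  qed
  define V where "V = PiE I (\<lambda>_. {-1::real,1})"
  have sub: "{v\<in>V. t < \<bar>\<Sum>i\<in>I. v i * a i\<bar>} \<subseteq>
      {v\<in>V. t < (\<Sum>i\<in>I. v i * a i)} \<union> {v\<in>V. t < (\<Sum>i\<in>I. v i * (- a i))}"
    by (auto simp: sum_negf)
  have finV: "finite V" unfolding V_def using fin by (simp add: finite_PiE)
  have "real (card {v\<in>V. t < \<bar>\<Sum>i\<in>I. v i * a i\<bar>})
      \<le> real (card {v\<in>V. t < (\<Sum>i\<in>I. v i * a i)}) + real (card {v\<in>V. t < (\<Sum>i\<in>I. v i * (- a i))})"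
  proof -
    have "card {v\<in>V. t < \<bar>\<Sum>i\<in>I. v i * a i\<bar>} \<le>
       card ({v\<in>V. t < (\<Sum>i\<in>I. v i * a i)} \<union> {v\<in>V. t < (\<Sum>i\<in>I. v i * (- a i))})"
      by (intro card_mono sub) (use finV in auto)
    also have "\<dots> \<le> card {v\<in>V. t < (\<Sum>i\<in>I. v i * a i)} + card {v\<in>V. t < (\<Sum>i\<in>I. v i * (- a i))}"
      by (rule card_Un_le)
    finally show ?thesis by linarith
  qed
  also have "\<dots> \<le> 2 ^ card I * exp (- t\<^sup>2 / (2 * \<sigma>2)) + 2 ^ card I * exp (- t\<^sup>2 / (2 * \<sigma>2))"
    unfolding V_def
    by (intro add_mono tail_one[OF fin _ pos t]) (simp_all add: \<sigma>2_def)
  also have "\<dots> \<le> 2 * 2 ^ card I * exp (- r / 4)"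
    using e by simp
  finally show ?thesis unfolding V_def .
qed

lemma good_real:
  fixes n p pv :: real
  assumes n: "n > 0" and p: "0 \<le> p" "p \<le> 1" and pv: "0 \<le> pv" "pv \<le> 1"
    and X: "\<bar>pv - p\<bar> \<le> max (1/n) (sqrt (min p (1-p) / (4*n)))"
  shows "\<bar>p - pv\<bar> \<le> max (1/n) (sqrt (pv * (1 - pv) / n))"
proof (cases "\<bar>pv - p\<bar> \<le> 1/n")
  case True then show ?thesis by (simp add: abs_minus_commute)
next
  case False
  define m where "m = min p (1-p)"
  define x where "x = \<bar>pv - p\<bar>"
  have m0: "m \<ge> 0" using p unfolding m_def by simp
  have x1: "x \<le> sqrt (m / (4*n))" using X False unfolding x_def m_def by auto
  have x2: "x > 1/n" using False unfolding x_def by simp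
  have x0: "x \<ge> 0" unfolding x_def by simp
  have xsq: "x\<^sup>2 \<le> m / (4*n)"
  proof -
    have "x\<^sup>2 \<le> (sqrt (m / (4*n)))\<^sup>2" by (rule power_mono[OF x1 x0])
    also have "\<dots> = m / (4*n)" using m0 n by simp
    finally show ?thesis .
  qed
  have "(1/n)\<^sup>2 < x\<^sup>2" using x2 n by (intro power_strict_mono) auto
  then have "1/n\<^sup>2 < m/(4*n)" using xsq by (simp add: power_divide)
  then have mn: "4 < m * n" using n by (simp add: field_simps power2_eq_square)
  have mp: "m > 0" using mn n m0 by (cases "m = 0") auto
  have mm: "m * 4 < m * (m * n)" using mult_strict_left_mono[OF mn mp] by simp
  have "x\<^sup>2 * 16 < m\<^sup>2"
  proof -
    have "x\<^sup>2 * 16 \<le> 4 * m / n" using xsq n by (simp add: field_simps)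
    also have "\<dots> < m\<^sup>2" using mm n by (simp add: field_simps power2_eq_square)
    finally show ?thesis .
  qed
  then have "(4*x)\<^sup>2 < m\<^sup>2" by (simp add: power_mult_distrib)
  then have "4*x < m" using m0 by (rule power_less_imp_less_base)
  then have xm: "x \<le> m / 4" by simp
  have "min pv (1 - pv) \<ge> m - x" unfolding m_def x_def by (auto simp: min_def abs_if)
  then have "min pv (1 - pv) \<ge> 3 * m / 4" using xm by simp
  then have mv: "min pv (1 - pv) \<ge> m / 2" using m0 by simp
  have "pv * (1 - pv) \<ge> m / 4"
  proof (cases "pv \<le> 1/2")
    case True
    then have "pv \<ge> m/2" using mv by simp
    then have "pv * (1 - pv) \<ge> (m/2) * (1/2)" using True m0 by (intro mult_mono) auto
    then show ?thesis by simp
  next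
    case False
    then have "1 - pv \<ge> m/2" using mv by simp
    then have "pv * (1 - pv) \<ge> (1/2) * (m/2)" using False m0 by (intro mult_mono) auto
    then show ?thesis by simp
  qed
  then have "x\<^sup>2 \<le> pv * (1 - pv) / n" using xsq n by (simp add: field_simps)
  then have "x \<le> sqrt (pv * (1 - pv) / n)" using x0 by (simp add: real_le_rsqrt)
  then show ?thesis unfolding x_def by (simp add: abs_minus_commute)
qed

lemma sq_le_aux:
  fixes x y :: real
  assumes "0 \<le> x" "x \<le> 1" "0 \<le> y" "y \<le> 1"
  shows "(x - y)\<^sup>2 \<le> x + y" "(x - y)\<^sup>2 \<le> 2 - x - y"
proof -
  have a: "\<bar>x - y\<bar> \<le> 1" using assms by auto
  have "(x - y)\<^sup>2 = \<bar>x - y\<bar> * \<bar>x - y\<bar>" by (simp add: power2_eq_square)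
  also have "\<dots> \<le> \<bar>x - y\<bar> * 1" by (rule mult_left_mono[OF a]) simp
  finally have b: "(x - y)\<^sup>2 \<le> \<bar>x - y\<bar>" by simp
  show "(x - y)\<^sup>2 \<le> x + y" using b assms by auto
  show "(x - y)\<^sup>2 \<le> 2 - x - y" using b assms by auto
qed

lemma Eref_bounds:
  fixes \<phi> :: "(nat \<Rightarrow> real) \<Rightarrow> real"
  assumes d: "d > 0" and phi: "\<forall>z. 0 \<le> \<phi> z \<and> \<phi> z \<le> 1"
  shows "0 \<le> measure_pmf.expectation (D_ref d) \<phi>" "measure_pmf.expectation (D_ref d) \<phi> \<le> 1"
proof -
  have s0: "0 \<le> (\<Sum>i<d. \<phi> (std_basis i) + \<phi> (- std_basis i))"
    using phi by (intro sum_nonneg) (simp add: add_nonneg_nonneg)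
  have s1: "(\<Sum>i<d. \<phi> (std_basis i) + \<phi> (- std_basis i)) \<le> (\<Sum>i<d. 2)"
    using phi by (intro sum_mono) (smt (verit))
  show "0 \<le> measure_pmf.expectation (D_ref d) \<phi>" using s0 d by (simp add: exp_ref)
  show "measure_pmf.expectation (D_ref d) \<phi> \<le> 1" using s1 d by (simp add: exp_ref field_simps)
qed

lemma Evec_bounds:
  fixes \<phi> :: "(nat \<Rightarrow> real) \<Rightarrow> real"
  assumes d: "d > 0" and phi: "\<forall>z. 0 \<le> \<phi> z \<and> \<phi> z \<le> 1" and w: "\<And>i. i < d \<Longrightarrow> \<bar>w i\<bar> \<le> 1"
  shows "0 \<le> measure_pmf.expectation (D_vec d w) \<phi>" "measure_pmf.expectation (D_vec d w) \<phi> \<le> 1"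
proof -
  have t0: "0 \<le> (1 + w i)/2 * \<phi> (std_basis i) + (1 - w i)/2 * \<phi> (- std_basis i)" if "i < d" for i
    using w[OF that] phi by (intro add_nonneg_nonneg mult_nonneg_nonneg) auto
  have t1: "(1 + w i)/2 * \<phi> (std_basis i) + (1 - w i)/2 * \<phi> (- std_basis i) \<le> 1" if "i < d" for i
  proof -
    have "(1 + w i)/2 * \<phi> (std_basis i) \<le> (1 + w i)/2 * 1"
      using w[OF that] phi by (intro mult_left_mono) auto
    moreover have "(1 - w i)/2 * \<phi> (- std_basis i) \<le> (1 - w i)/2 * 1"
      using w[OF that] phi by (intro mult_left_mono) auto
    ultimately show ?thesis by simp
  qed
  have s0: "0 \<le> (\<Sum>i<d. (1 + w i)/2 * \<phi> (std_basis i) + (1 - w i)/2 * \<phi> (- std_basis i))"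
    using t0 by (intro sum_nonneg) auto
  have s1: "(\<Sum>i<d. (1 + w i)/2 * \<phi> (std_basis i) + (1 - w i)/2 * \<phi> (- std_basis i)) \<le> (\<Sum>i<d. 1)"
    using t1 by (intro sum_mono) auto
  show "0 \<le> measure_pmf.expectation (D_vec d w) \<phi>" using s0 d by (simp add: exp_vec[OF d w])
  show "measure_pmf.expectation (D_vec d w) \<phi> \<le> 1" using s1 d by (simp add: exp_vec[OF d w] field_simps)
qed

lemma Ev_diff:
  fixes \<phi> :: "(nat \<Rightarrow> real) \<Rightarrow> real"
  assumes d: "d > 0" and al: "0 \<le> \<alpha>" "\<alpha> \<le> 1" and v: "\<And>i. i < d \<Longrightarrow> v i \<in> {-1, 1}"
  shows "measure_pmf.expectation (D_vec d (\<lambda>i. \<alpha> * v i)) \<phi> - measure_pmf.expectation (D_ref d) \<phi>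
     = \<alpha> / (2 * real d) * (\<Sum>i<d. v i * (\<phi> (std_basis i) - \<phi> (- std_basis i)))"
proof -
  have w: "\<bar>\<alpha> * v i\<bar> \<le> 1" if "i < d" for i using v[OF that] al by auto
  have "(\<Sum>i<d. (1 + \<alpha> * v i)/2 * \<phi> (std_basis i) + (1 - \<alpha> * v i)/2 * \<phi> (- std_basis i))
      = (\<Sum>i<d. (\<phi> (std_basis i) + \<phi> (- std_basis i)) / 2 + \<alpha> / 2 * (v i * (\<phi> (std_basis i) - \<phi> (- std_basis i))))"
    by (intro sum.cong) (auto simp: field_simps)
  also have "\<dots> = (\<Sum>i<d. \<phi> (std_basis i) + \<phi> (- std_basis i)) / 2 + \<alpha> / 2 * (\<Sum>i<d. v i * (\<phi> (std_basis i) - \<phi> (- std_basis i)))"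
    by (simp only: sum.distrib sum_divide_distrib[symmetric] sum_distrib_left[symmetric])
  finally have eq: "(\<Sum>i<d. (1 + \<alpha> * v i)/2 * \<phi> (std_basis i) + (1 - \<alpha> * v i)/2 * \<phi> (- std_basis i))
      = (\<Sum>i<d. \<phi> (std_basis i) + \<phi> (- std_basis i)) / 2 + \<alpha> / 2 * (\<Sum>i<d. v i * (\<phi> (std_basis i) - \<phi> (- std_basis i)))" .
  show ?thesis
  proof -
    have w': "\<And>i. i < d \<Longrightarrow> \<bar>(\<lambda>i. \<alpha> * v i) i\<bar> \<le> 1" using w by simp
    have e1: "measure_pmf.expectation (D_vec d (\<lambda>i. \<alpha> * v i)) \<phi> =
       (\<Sum>i<d. (1 + \<alpha> * v i)/2 * \<phi> (std_basis i) + (1 - \<alpha> * v i)/2 * \<phi> (- std_basis i)) / real d"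
      using exp_vec[OF d w'] by simp
    show ?thesis unfolding e1 exp_ref[OF d] eq using d by (simp add: field_simps)
  qed
qed

lemma card_bad:
  fixes \<phi> :: "(nat \<Rightarrow> real) \<Rightarrow> real"
  assumes d: "d > 0" and al: "0 \<le> \<alpha>" "\<alpha> \<le> 1" and r: "r > 0"
    and phi: "\<forall>z. 0 \<le> \<phi> z \<and> \<phi> z \<le> 1"
  shows "real (card {v\<in>PiE {..<d} (\<lambda>_. {-1::real,1}).
     \<not> \<bar>measure_pmf.expectation (D_ref d) \<phi> - measure_pmf.expectation (D_vec d (\<lambda>i. \<alpha> * v i)) \<phi>\<bar>
        \<le> max (1 / (real d / (r * \<alpha>\<^sup>2)))
            (sqrt (measure_pmf.expectation (D_vec d (\<lambda>i. \<alpha> * v i)) \<phi> *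
                   (1 - measure_pmf.expectation (D_vec d (\<lambda>i. \<alpha> * v i)) \<phi>) / (real d / (r * \<alpha>\<^sup>2))))})
     \<le> 2 * 2 ^ d * exp (- r / 4)" (is "real (card ?B) \<le> _")
proof -
  define V where "V = PiE {..<d} (\<lambda>_. {-1::real,1})"
  define n where "n = real d / (r * \<alpha>\<^sup>2)"
  define p where "p = measure_pmf.expectation (D_ref d) \<phi>"
  define Ev where "Ev = (\<lambda>v. measure_pmf.expectation (D_vec d (\<lambda>i. \<alpha> * v i)) \<phi>)"
  define a where "a = (\<lambda>i. \<phi> (std_basis i) - \<phi> (- std_basis i))"
  have vV: "\<And>i. i < d \<Longrightarrow> v i \<in> {-1, 1}" if "v \<in> V" for v using that unfolding V_def by auto
  have diff: "Ev v - p = \<alpha> / (2 * real d) * (\<Sum>i<d. v i * a i)" if "v \<in> V" for v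
    unfolding Ev_def p_def a_def by (rule Ev_diff[OF d al vV[OF that]])
  have finV: "finite V" unfolding V_def by (simp add: finite_PiE)
  have p01: "0 \<le> p" "p \<le> 1" unfolding p_def using Eref_bounds[OF d phi] by auto
  have Ev01: "0 \<le> Ev v \<and> Ev v \<le> 1" if "v \<in> V" for v
  proof -
    have w: "\<bar>(\<lambda>i. \<alpha> * v i) i\<bar> \<le> 1" if "i < d" for i
    proof -
      have "\<bar>v i\<bar> = 1" using vV[OF \<open>v \<in> V\<close> that] by auto
      then show ?thesis using al by (simp add: abs_mult)
    qed
    show ?thesis unfolding Ev_def using Evec_bounds[OF d phi w] by auto
  qed
  have Bdef: "?B = {v\<in>V. \<not> \<bar>p - Ev v\<bar> \<le> max (1/n) (sqrt (Ev v * (1 - Ev v) / n))}"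
    unfolding V_def n_def p_def Ev_def ..
  show ?thesis
  proof (cases "\<alpha> = 0")
    case True
    have "?B = {}"
    proof -
      have "\<bar>p - Ev v\<bar> \<le> max (1/n) (sqrt (Ev v * (1 - Ev v) / n))" if "v \<in> V" for v
        using diff[OF that] True by (simp add: n_def)
      then show ?thesis unfolding Bdef by auto
    qed
    then have "real (card ?B) = 0" by (simp only: card.empty of_nat_0)
    then show ?thesis by simp
  next
    case False
    then have ap: "\<alpha> > 0" using al by simp
    have np: "n > 0" unfolding n_def using d r ap by simp
    have na: "n * \<alpha>\<^sup>2 = real d / r" unfolding n_def using ap r by (simp add: field_simps)
    define m where "m = min p (1 - p)"
    define s where "s = max (1/n) (sqrt (m / (4*n)))"
    define t where "t = 2 * real d * s / \<alpha>"
    have m0: "m \<ge> 0" unfolding m_def using p01 by simp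
    have s0: "s \<ge> 0" unfolding s_def using np by (simp add: le_max_iff_disj)
    have t0: "t \<ge> 0" unfolding t_def using s0 ap by simp
    have sub: "?B \<subseteq> {v\<in>V. t < \<bar>\<Sum>i<d. v i * a i\<bar>}"
    proof
      fix v assume vB: "v \<in> ?B"
      then have v: "v \<in> V" unfolding Bdef by simp
      show "v \<in> {v\<in>V. t < \<bar>\<Sum>i<d. v i * a i\<bar>}"
      proof (rule ccontr)
        assume "v \<notin> {v\<in>V. t < \<bar>\<Sum>i<d. v i * a i\<bar>}"
        then have St: "\<bar>\<Sum>i<d. v i * a i\<bar> \<le> t" using v by auto
        have "\<bar>Ev v - p\<bar> = \<alpha> / (2 * real d) * \<bar>\<Sum>i<d. v i * a i\<bar>"
          using diff[OF v] ap by (simp add: abs_mult)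
        also have "\<dots> \<le> \<alpha> / (2 * real d) * t" using St ap by (intro mult_left_mono) auto
        also have "\<dots> = s" unfolding t_def using ap d by simp
        finally have "\<bar>Ev v - p\<bar> \<le> max (1/n) (sqrt (min p (1-p) / (4*n)))"
          unfolding s_def m_def .
        then have "\<bar>p - Ev v\<bar> \<le> max (1/n) (sqrt (Ev v * (1 - Ev v) / n))"
          using good_real[OF np p01] Ev01[OF v] by blast
        then show False using vB unfolding Bdef by simp
      qed
    qed
    have sa: "(\<Sum>i<d. (a i)\<^sup>2) \<le> 2 * real d * m"
    proof -
      have tot: "(\<Sum>i<d. \<phi> (std_basis i) + \<phi> (- std_basis i)) = 2 * real d * p"
        unfolding p_def exp_ref[OF d] using d by simp
      have "(\<Sum>i<d. (a i)\<^sup>2) \<le> (\<Sum>i<d. \<phi> (std_basis i) + \<phi> (- std_basis i))"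
        unfolding a_def using phi by (intro sum_mono sq_le_aux(1)) auto
      then have A: "(\<Sum>i<d. (a i)\<^sup>2) \<le> 2 * real d * p" using tot by simp
      have "(\<Sum>i<d. (a i)\<^sup>2) \<le> (\<Sum>i<d. 2 - \<phi> (std_basis i) - \<phi> (- std_basis i))"
        unfolding a_def using phi by (intro sum_mono sq_le_aux(2)) auto
      also have "\<dots> = 2 * real d - (\<Sum>i<d. \<phi> (std_basis i) + \<phi> (- std_basis i))"
        by (simp add: sum_subtractf sum.distrib)
      finally have B: "(\<Sum>i<d. (a i)\<^sup>2) \<le> 2 * real d * (1 - p)" using tot by (simp add: algebra_simps)
      show ?thesis using A B unfolding m_def by (simp add: min_def)
    qed
    have tsq: "t\<^sup>2 \<ge> (r / 2) * (\<Sum>i<d. (a i)\<^sup>2)"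
    proof -
      have s2: "s\<^sup>2 \<ge> m / (4*n)"
      proof -
        have "sqrt (m / (4*n)) \<le> s" unfolding s_def by simp
        then have "(sqrt (m / (4*n)))\<^sup>2 \<le> s\<^sup>2" using m0 np by (intro power_mono) auto
        then show ?thesis using m0 np by simp
      qed
      have "t\<^sup>2 = (2 * real d / \<alpha>)\<^sup>2 * s\<^sup>2" unfolding t_def by (simp add: power_mult_distrib power_divide)
      also have "\<dots> \<ge> (2 * real d / \<alpha>)\<^sup>2 * (m / (4*n))" using s2 by (intro mult_left_mono) auto
      finally have "t\<^sup>2 \<ge> (2 * real d / \<alpha>)\<^sup>2 * (m / (4*n))" .
      moreover have "(2 * real d / \<alpha>)\<^sup>2 * (m / (4*n)) = real d * real d * m / (n * \<alpha>\<^sup>2)"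
        using ap np by (simp add: field_simps power2_eq_square)
      moreover have "\<dots> = real d * m * r" unfolding na using d r by (simp add: field_simps)
      moreover have "(r / 2) * (\<Sum>i<d. (a i)\<^sup>2) \<le> (r/2) * (2 * real d * m)"
        using sa r by (intro mult_left_mono) auto
      ultimately show ?thesis by (simp add: algebra_simps)
    qed
    have "real (card ?B) \<le> real (card {v\<in>V. t < \<bar>\<Sum>i<d. v i * a i\<bar>})"
      using sub finV by (intro of_nat_mono card_mono) auto
    also have "\<dots> \<le> 2 * 2 ^ card {..<d} * exp (- r / 4)"
      unfolding V_def by (rule tail_abs[OF _ t0 tsq]) simp
    finally show ?thesis by simp
  qed
qed

theorem lemma3p22:
  shows "\<exists>c>0. \<forall>(d::nat) (\<alpha>::real) (r::real) (q::nat) (M::sq_alg measure).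
     d \<ge> 1 \<and> 0 \<le> \<alpha> \<and> \<alpha> \<le> 1 \<and> r > 0 \<and> prob_space M \<and>
     solves_B M q d \<alpha> (real d / (r * \<alpha>\<^sup>2))
     \<longrightarrow> real q \<ge> c * 2 powr (c * r)"
proof (intro exI[of _ "1/6"] conjI allI impI)
  show "(0::real) < 1/6" by simp
  fix d :: nat and \<alpha> r :: real and q :: nat and M :: "sq_alg measure"
  assume H: "d \<ge> 1 \<and> 0 \<le> \<alpha> \<and> \<alpha> \<le> 1 \<and> r > 0 \<and> prob_space M \<and>
     solves_B M q d \<alpha> (real d / (r * \<alpha>\<^sup>2))"
  then have d: "d > 0" and al: "0 \<le> \<alpha>" "\<alpha> \<le> 1" and r: "r > 0" and PM: "prob_space M"
    and SB: "solves_B M q d \<alpha> (real d / (r * \<alpha>\<^sup>2))" by auto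
  interpret prob_space M by (rule PM)
  define n where "n = real d / (r * \<alpha>\<^sup>2)"
  define Eref where "Eref = (\<lambda>\<phi>::(nat\<Rightarrow>real)\<Rightarrow>real. measure_pmf.expectation (D_ref d) \<phi>)"
  define Ev where "Ev = (\<lambda>(v::nat\<Rightarrow>real) (\<phi>::(nat\<Rightarrow>real)\<Rightarrow>real). measure_pmf.expectation (D_vec d (\<lambda>i. \<alpha> * v i)) \<phi>)"
  define bnd where "bnd = (\<lambda>\<phi>::(nat\<Rightarrow>real)\<Rightarrow>real. \<forall>z. 0 \<le> \<phi> z \<and> \<phi> z \<le> 1)"
  define good where "good = (\<lambda>v \<phi>. \<bar>Eref \<phi> - Ev v \<phi>\<bar> \<le> max (1/n) (sqrt (Ev v \<phi> * (1 - Ev v \<phi>) / n)))"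
  define orc where "orc = (\<lambda>v \<phi>. if bnd \<phi> \<and> \<not> good v \<phi> then Ev v \<phi> else Eref \<phi>)"
  define V where "V = PiE {..<d} (\<lambda>_. {-1::real,1})"
  define bound where "bound = 2 * 2 ^ d * exp (- r / 4)"
  have n0: "n \<ge> 0" unfolding n_def using r by simp
  have max0: "0 \<le> max (1/n) (sqrt x)" for x using n0 by (simp add: le_max_iff_disj)
  have valid_ref: "vstat_valid (D_ref d) n Eref"
    unfolding vstat_valid_def Let_def Eref_def using max0 by simp
  have valid_v: "vstat_valid (D_vec d (\<lambda>i. \<alpha> * v i)) n (orc v)" for v
    unfolding vstat_valid_def Let_def
  proof (intro allI impI)
    fix \<phi> :: "(nat\<Rightarrow>real)\<Rightarrow>real" assume "\<forall>z. 0 \<le> \<phi> z \<and> \<phi> z \<le> 1"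
    then have b: "bnd \<phi>" unfolding bnd_def .
    show "\<bar>orc v \<phi> - measure_pmf.expectation (D_vec d (\<lambda>i. \<alpha> * v i)) \<phi>\<bar>
       \<le> max (1 / n) (sqrt (measure_pmf.expectation (D_vec d (\<lambda>i. \<alpha> * v i)) \<phi> *
              (1 - measure_pmf.expectation (D_vec d (\<lambda>i. \<alpha> * v i)) \<phi>) / n))"
    proof (cases "good v \<phi>")
      case True
      then show ?thesis unfolding orc_def good_def Ev_def using b by simp
    next
      case False
      then show ?thesis unfolding orc_def Ev_def using b max0 by simp
    qed
  qed
  have fam: "D_vec d (\<lambda>i. \<alpha> * v i) \<in> D_family d \<alpha>" if "v \<in> V" for v
    unfolding D_family_def using that unfolding V_def by blast
  have ref: "{A \<in> space M. \<not> sq_run A q Eref} \<in> sets M \<and> measure M {A \<in> space M. \<not> sq_run A q Eref} \<ge> 2/3"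
    using SB valid_ref unfolding solves_B_def n_def by blast
  have famr: "{A \<in> space M. sq_run A q (orc v)} \<in> sets M \<and> measure M {A \<in> space M. sq_run A q (orc v)} \<ge> 2/3"
    if "v \<in> V" for v
    using SB fam[OF that] valid_v[of v] unfolding solves_B_def n_def by blast
  define T where "T = (\<lambda>v. {A \<in> space M. sq_run A q (orc v)} \<inter> {A \<in> space M. \<not> sq_run A q Eref})"
  have Tmeas: "T v \<in> sets M" if "v \<in> V" for v
    unfolding T_def using ref famr[OF that] by blast
  have Tm: "measure M (T v) \<ge> 1/3" if "v \<in> V" for v
  proof -
    define X where "X = {A \<in> space M. sq_run A q (orc v)}"
    define Y where "Y = {A \<in> space M. \<not> sq_run A q Eref}"
    have X: "X \<in> sets M" "measure M X \<ge> 2/3" using famr[OF that] unfolding X_def by auto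
    have Y: "Y \<in> sets M" "measure M Y \<ge> 2/3" using ref unfolding Y_def by auto
    have "measure M (X \<union> Y) = measure M X + measure M Y - measure M (X \<inter> Y)"
      by (rule measure_Un3) (use X Y fmeasurable_eq_sets in auto)
    moreover have "measure M (X \<union> Y) \<le> 1" by (rule prob_le_1)
    ultimately have "measure M (X \<inter> Y) \<ge> 1/3" using X Y by linarith
    then show ?thesis unfolding T_def X_def Y_def .
  qed
  define \<phi>k where "\<phi>k = (\<lambda>(A::sq_alg) k. fst A (sq_transcript (fst A) Eref k))"
  define badA where "badA = (\<lambda>A v. \<exists>k<q. bnd (\<phi>k A k) \<and> \<not> good v (\<phi>k A k))"
  have trans: "sq_transcript (fst A) (orc v) k = sq_transcript (fst A) Eref k"
    if "\<not> badA A v" "k \<le> q" for A v k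
    using that(2)
  proof (induction k)
    case 0 then show ?case by simp
  next
    case (Suc k)
    then have IH: "sq_transcript (fst A) (orc v) k = sq_transcript (fst A) Eref k" by simp
    have "k < q" using Suc by simp
    then have "\<not> (bnd (\<phi>k A k) \<and> \<not> good v (\<phi>k A k))" using that(1) unfolding badA_def by blast
    then have "orc v (fst A (sq_transcript (fst A) Eref k)) = Eref (fst A (sq_transcript (fst A) Eref k))"
      unfolding orc_def \<phi>k_def by auto
    then show ?case using IH by (simp add: Let_def)
  qed
  have inT: "badA A v" if "v \<in> V" "A \<in> T v" for A v
  proof (rule ccontr)
    assume "\<not> badA A v"
    then have "sq_run A q (orc v) = sq_run A q Eref"
      unfolding sq_run_def using trans by simp
    then show False using that(2) unfolding T_def by auto
  qed
  have finV: "finite V" unfolding V_def by (simp add: finite_PiE)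
  have cardA: "real (card {v\<in>V. badA A v}) \<le> real q * bound" for A
  proof -
    have eq: "{v\<in>V. badA A v} = (\<Union>k<q. {v\<in>V. bnd (\<phi>k A k) \<and> \<not> good v (\<phi>k A k)})"
      unfolding badA_def by auto
    have each: "real (card {v\<in>V. bnd (\<phi>k A k) \<and> \<not> good v (\<phi>k A k)}) \<le> bound" for k
    proof (cases "bnd (\<phi>k A k)")
      case True
      have "{v\<in>V. bnd (\<phi>k A k) \<and> \<not> good v (\<phi>k A k)} = {v\<in>V. \<not> good v (\<phi>k A k)}"
        using True by simp
      moreover have "real (card {v\<in>V. \<not> good v (\<phi>k A k)}) \<le> bound"
      proof -
        have b: "\<forall>z. 0 \<le> \<phi>k A k z \<and> \<phi>k A k z \<le> 1" using True unfolding bnd_def .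
        note cb = card_bad[OF d al r b]
        have "{v\<in>V. \<not> good v (\<phi>k A k)} = {v\<in>PiE {..<d} (\<lambda>_. {-1::real,1}).
          \<not> \<bar>measure_pmf.expectation (D_ref d) (\<phi>k A k) - measure_pmf.expectation (D_vec d (\<lambda>i. \<alpha> * v i)) (\<phi>k A k)\<bar>
             \<le> max (1 / (real d / (r * \<alpha>\<^sup>2)))
               (sqrt (measure_pmf.expectation (D_vec d (\<lambda>i. \<alpha> * v i)) (\<phi>k A k) *
                   (1 - measure_pmf.expectation (D_vec d (\<lambda>i. \<alpha> * v i)) (\<phi>k A k)) / (real d / (r * \<alpha>\<^sup>2))))}"
          unfolding V_def good_def Eref_def Ev_def n_def ..
        then show ?thesis using cb unfolding bound_def by simp
      qed
      ultimately show ?thesis by simp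
    next
      case False
      then show ?thesis unfolding bound_def by simp
    qed
    have "card {v\<in>V. badA A v} \<le> (\<Sum>k<q. card {v\<in>V. bnd (\<phi>k A k) \<and> \<not> good v (\<phi>k A k)})"
      unfolding eq by (rule card_UN_le) simp
    then have "real (card {v\<in>V. badA A v}) \<le> real (\<Sum>k<q. card {v\<in>V. bnd (\<phi>k A k) \<and> \<not> good v (\<phi>k A k)})"
      by (rule of_nat_mono)
    also have "\<dots> = (\<Sum>k<q. real (card {v\<in>V. bnd (\<phi>k A k) \<and> \<not> good v (\<phi>k A k)}))"
      by (rule of_nat_sum)
    also have "\<dots> \<le> (\<Sum>k<q. bound)" by (intro sum_mono each)
    finally show ?thesis by simp
  qed
  have bound0: "bound \<ge> 0" unfolding bound_def by simp
  have sumT: "(\<Sum>v\<in>V. measure M (T v)) \<le> real q * bound"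
  proof -
    have "(\<Sum>v\<in>V. measure M (T v)) = (\<Sum>v\<in>V. integral\<^sup>L M (indicator (T v)))"
      using Tmeas by (intro sum.cong) (auto simp: Int_absorb2 sets.sets_into_space)
    also have "\<dots> = integral\<^sup>L M (\<lambda>A. \<Sum>v\<in>V. indicator (T v) A)"
    proof -
      have integ: "integrable M (indicator (T v) :: _ \<Rightarrow> real)" if "v \<in> V" for v
        using Tmeas[OF that] by (intro integrable_real_indicator) (simp_all add: less_top[symmetric])
      show ?thesis using Bochner_Integration.integral_sum[where I=V and M=M and f="\<lambda>v. indicator (T v)", OF integ] by simp
    qed
    also have "\<dots> \<le> integral\<^sup>L M (\<lambda>A. real q * bound)"
    proof (rule integral_mono')
      show "integrable M (\<lambda>A. real q * bound)" by simp
      show "0 \<le> real q * bound" if "A \<in> space M" for A using bound0 by simp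
      show "(\<Sum>v\<in>V. indicator (T v) A) \<le> real q * bound" if "A \<in> space M" for A
      proof -
        have "(\<Sum>v\<in>V. indicator (T v) A) \<le> (\<Sum>v\<in>V. if badA A v then 1 else (0::real))"
          by (intro sum_mono) (auto simp: indicator_def dest: inT)
        also have "\<dots> = real (card {v\<in>V. badA A v})"
        proof -
          have e: "V \<inter> {v. badA A v} = {v\<in>V. badA A v}" by auto
          show ?thesis using finV by (simp add: sum.If_cases e)
        qed
        also have "\<dots> \<le> real q * bound" by (rule cardA)
        finally show ?thesis .
      qed
    qed
    also have "\<dots> = real q * bound" by (simp add: prob_space)
    finally show ?thesis .
  qed
  have cardV: "card V = 2 ^ d" unfolding V_def by (simp add: card_PiE numeral_2_eq_2)
  have h1: "real (2 ^ d) * (1/3) \<le> (\<Sum>v\<in>V. measure M (T v))"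
  proof -
    have "(\<Sum>v\<in>V. (1/3::real)) \<le> (\<Sum>v\<in>V. measure M (T v))" by (intro sum_mono Tm)
    then show ?thesis using cardV by simp
  qed
  have eqb: "real q * bound = 2 ^ d * (real q * 2 * exp (- r / 4))" unfolding bound_def by (simp add: algebra_simps)
  have "(2::real) ^ d * (1/3) \<le> 2 ^ d * (real q * 2 * exp (- r / 4))" using h1 sumT unfolding eqb of_nat_power of_nat_numeral by linarith
  then have "1/3 \<le> real q * 2 * exp (- r / 4)" by (rule mult_left_le_imp_le) simp
  then have "1 \<le> real q * 6 * exp (- r / 4)" by simp
  then have qb: "exp (r / 4) / 6 \<le> real q" by (simp add: exp_minus field_simps)
  have "2 powr (1/6 * r) = exp (1/6 * r * ln 2)" by (simp add: powr_def)
  also have "\<dots> \<le> exp (r / 4)"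
  proof -
    have "1/6 * r * ln 2 \<le> 1/6 * r * 1" using r ln_2_less_1 by (intro mult_left_mono) auto
    then have "1/6 * r * ln 2 \<le> r / 4" using r by linarith
    then show ?thesis by simp
  qed
  finally show "1/6 * 2 powr (1/6 * r) \<le> real q" using qb by simp
qed

end
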